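(* Let $V\subset\mathbb P^5$ be a Veronese surface and $P\subset\mathbb P^5$ a plane such that $V\cap P$ is a (smooth) conic $C$. Then $W=V\cup P$ is a reducible (generalized) surface with one apparent double point, i.e. through a general point of $\mathbb P^5$ there passes exactly one secant line to $W$.
   Context: A Veronese surface is the image of $\mathbb P^2$ in $\mathbb P^5$ under the embedding by the complete linear system of conics. A secant line to $W$ is a line cutting $W$ scheme-theoretically in a reduced scheme of length two. *)

theory Defs
  imports "HOL-Analysis.Analysis" "HOL-Computational_Algebra.Polynomial"
begin

text \<open>Points of P^5 are represented by nonzero vectors of complex^6 (homogeneous
coordinates); subvarieties of P^5 by their affine cones minus the origin.\<close>

inductive polyfun :: "(complex^6 \<Rightarrow> complex) \<Rightarrow> bool" where
  pf_const: "polyfun (\<lambda>x. c)"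
| pf_coord: "polyfun (\<lambda>x. x $ i)"
| pf_add: "polyfun f \<Longrightarrow> polyfun g \<Longrightarrow> polyfun (\<lambda>x. f x + g x)"
| pf_mult: "polyfun f \<Longrightarrow> polyfun g \<Longrightarrow> polyfun (\<lambda>x. f x * g x)"

definition homogeneous_form :: "nat \<Rightarrow> (complex^6 \<Rightarrow> complex) \<Rightarrow> bool" where
  "homogeneous_form d F \<longleftrightarrow> polyfun F \<and> (\<forall>c x. F (c *s x) = c ^ d * F x)"

definition vanishing_form :: "(complex^6) set \<Rightarrow> (complex^6 \<Rightarrow> complex) \<Rightarrow> bool" where
  "vanishing_form W F \<longleftrightarrow> (\<exists>d. homogeneous_form d F) \<and> (\<forall>x\<in>W. F x = 0)"

definition ver :: "complex^3 \<Rightarrow> complex^6" where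
  "ver y = vector [y$1 * y$1, y$2 * y$2, y$3 * y$3, y$1 * y$2, y$1 * y$3, y$2 * y$3]"

definition is_veronese :: "(complex^6) set \<Rightarrow> bool" where
  "is_veronese V \<longleftrightarrow> (\<exists>A :: complex^6^6. invertible A \<and> V = {A *v ver y | y. y \<noteq> 0})"

definition indep3 :: "complex^6 \<Rightarrow> complex^6 \<Rightarrow> complex^6 \<Rightarrow> bool" where
  "indep3 u1 u2 u3 \<longleftrightarrow>
     (\<forall>c1 c2 c3. c1 *s u1 + c2 *s u2 + c3 *s u3 = 0 \<longrightarrow> c1 = 0 \<and> c2 = 0 \<and> c3 = 0)"

definition comb3 :: "complex^6 \<Rightarrow> complex^6 \<Rightarrow> complex^6 \<Rightarrow> complex^3 \<Rightarrow> complex^6" where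
  "comb3 u1 u2 u3 y = y$1 *s u1 + y$2 *s u2 + y$3 *s u3"

definition is_plane :: "(complex^6) set \<Rightarrow> bool" where
  "is_plane P \<longleftrightarrow> (\<exists>u1 u2 u3. indep3 u1 u2 u3 \<and> P = {comb3 u1 u2 u3 y | y. y \<noteq> 0})"

definition smooth_conic_in :: "(complex^6) set \<Rightarrow> (complex^6) set \<Rightarrow> bool" where
  "smooth_conic_in P C \<longleftrightarrow>
     (\<exists>u1 u2 u3 (Q :: complex^3^3). indep3 u1 u2 u3 \<and> P = {comb3 u1 u2 u3 y | y. y \<noteq> 0}
        \<and> transpose Q = Q \<and> invertible Q
        \<and> C = {comb3 u1 u2 u3 y | y. y \<noteq> 0 \<and> (\<Sum>i\<in>UNIV. y$i * (Q *v y)$i) = 0})"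

definition indep2 :: "complex^6 \<Rightarrow> complex^6 \<Rightarrow> bool" where
  "indep2 a b \<longleftrightarrow> (\<forall>c1 c2. c1 *s a + c2 *s b = 0 \<longrightarrow> c1 = 0 \<and> c2 = 0)"

definition line_through :: "complex^6 \<Rightarrow> complex^6 \<Rightarrow> (complex^6) set" where
  "line_through a b = {s *s a + t *s b | s t. True}"

definition simple_at :: "(complex^6) set \<Rightarrow> complex^6 \<Rightarrow> complex^6 \<Rightarrow> bool" where
  "simple_at W p q \<longleftrightarrow>
     (\<exists>F r. vanishing_form W F \<and> (\<forall>t. poly r t = F (p + t *s q)) \<and> order 0 r = 1)"

text \<open>L meets W scheme-theoretically in a reduced scheme of length two: the ideal on
L (= P^1) generated by restrictions of the ideal of W has saturation generated by a
product of two distinct linear forms, i.e. its common zeros are exactly two distinct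
points p, q and the minimal vanishing order at each of them is 1.\<close>
definition secant_line :: "(complex^6) set \<Rightarrow> (complex^6) set \<Rightarrow> bool" where
  "secant_line W L \<longleftrightarrow>
     (\<exists>a b. indep2 a b \<and> L = line_through a b) \<and>
     (\<exists>p q. indep2 p q \<and> p \<in> L \<and> q \<in> L \<and>
        (\<forall>x\<in>L. x \<noteq> 0 \<longrightarrow>
           ((\<forall>F. vanishing_form W F \<longrightarrow> F x = 0) \<longleftrightarrow> (\<exists>c. x = c *s p \<or> x = c *s q)))
        \<and> simple_at W p q \<and> simple_at W q p)"

end

theory Submission
  imports Defs
begin


definition dotc :: "complex^3 \<Rightarrow> complex^3 \<Rightarrow> complex" where
  "dotc a b = (\<Sum>i\<in>UNIV. a$i * b$i)"

lemma dotc_3: "dotc a b = a$1*b$1 + a$2*b$2 + a$3*b$3"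
  by (simp add: dotc_def sum_3)

definition indep3c :: "complex^3 \<Rightarrow> complex^3 \<Rightarrow> complex^3 \<Rightarrow> bool" where
  "indep3c a b c \<longleftrightarrow> (\<forall>x y z. x *s a + y *s b + z *s c = 0 \<longrightarrow> x = 0 \<and> y = 0 \<and> z = 0)"

definition rows3 :: "complex^3 \<Rightarrow> complex^3 \<Rightarrow> complex^3 \<Rightarrow> complex^3^3" where
  "rows3 a b c = vector [a,b,c]"

lemma rows3_mult: "rows3 a b c *v x = vector [dotc a x, dotc b x, dotc c x]"
  unfolding vec_eq_iff rows3_def matrix_vector_mult_def dotc_def forall_3
  by simp

lemma cols3_mult: "transpose (rows3 a b c) *v x = x$1 *s a + x$2 *s b + x$3 *s c"
  unfolding vec_eq_iff rows3_def transpose_matrix_vector vector_matrix_mult_def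
  by (simp add: sum_3 mult.commute)

lemma cols3_mult': "x v* rows3 a b c = x$1 *s a + x$2 *s b + x$3 *s c"
  using cols3_mult by simp

lemma vec3_eq0: "(vector [a,b,c] :: complex^3) = 0 \<longleftrightarrow> a = 0 \<and> b = 0 \<and> c = 0"
  unfolding vec_eq_iff forall_3 by simp

lemma indep3c_det: "indep3c a b c \<longleftrightarrow> det (rows3 a b c) \<noteq> 0"
proof -
  have "det (rows3 a b c) \<noteq> 0 \<longleftrightarrow> det (transpose (rows3 a b c)) \<noteq> 0" by (simp add: det_transpose)
  also have "\<dots> \<longleftrightarrow> inj ((*v) (transpose (rows3 a b c)))"
    using det_nz_iff_inj_gen[of "(*v) (transpose (rows3 a b c))"] matrix_of_matrix_vector_mul
    by (metis matrix_vector_mul_linear_gen)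
  also have "\<dots> \<longleftrightarrow> indep3c a b c"
  proof
    assume i: "inj ((*v) (transpose (rows3 a b c)))"
    show "indep3c a b c" unfolding indep3c_def
    proof (intro allI impI)
      fix x y z assume "x *s a + y *s b + z *s c = 0"
      then have "transpose (rows3 a b c) *v vector [x,y,z] = transpose (rows3 a b c) *v 0"
        by (simp add: cols3_mult')
      then have "(vector [x,y,z] :: complex^3) = 0" using i by (meson injD)
      then show "x = 0 \<and> y = 0 \<and> z = 0" by (simp add: vec3_eq0)
    qed
  next
    assume i: "indep3c a b c"
    show "inj ((*v) (transpose (rows3 a b c)))"
    proof (rule injI)
      fix u v assume "transpose (rows3 a b c) *v u = transpose (rows3 a b c) *v v"
      then have "transpose (rows3 a b c) *v (u - v) = 0" by (simp add: matrix_vector_mult_diff_distrib)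
      then have "(u-v)$1 *s a + (u-v)$2 *s b + (u-v)$3 *s c = 0" by (simp add: cols3_mult')
      then have "(u-v)$1 = 0 \<and> (u-v)$2 = 0 \<and> (u-v)$3 = 0" using i unfolding indep3c_def by blast
      then show "u = v" unfolding vec_eq_iff forall_3 by simp
    qed
  qed
  finally show ?thesis by simp
qed

lemma indep3c_span:
  assumes "indep3c a b c" shows "\<exists>x y z. v = x *s a + y *s b + z *s c"
proof -
  have "det (transpose (rows3 a b c)) \<noteq> 0" using assms by (simp add: indep3c_det det_transpose)
  then have "invertible (transpose (rows3 a b c))" using invertible_det_nz by blast
  then obtain u where "transpose (rows3 a b c) *v u = v" using invertible_eq_bij
    by (metis bij_pointE)
  then show ?thesis by (auto simp: cols3_mult')
qed

lemma indep3c_dual: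
  assumes "indep3c a b c" shows "\<exists>r. dotc a r = x \<and> dotc b r = y \<and> dotc c r = z"
proof -
  have "invertible (rows3 a b c)" using assms indep3c_det invertible_det_nz by blast
  then obtain u where "rows3 a b c *v u = vector [x,y,z]" using invertible_eq_bij
    by (metis bij_pointE)
  then show ?thesis unfolding rows3_mult by (metis vector_3)
qed

lemma indep3c_orth:
  assumes "indep3c a b c" "dotc a r = 0" "dotc b r = 0" "dotc c r = 0" shows "r = 0"
proof -
  have "invertible (rows3 a b c)" using assms indep3c_det invertible_det_nz by blast
  then have "inj ((*v) (rows3 a b c))" using invertible_eq_bij bij_is_inj by blast
  moreover have "rows3 a b c *v r = rows3 a b c *v 0" using assms by (simp add: rows3_mult vec3_eq0)
  ultimately show ?thesis by (meson injD)
qed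

lemma not_indep3c_orth:
  assumes "\<not> indep3c a b c" shows "\<exists>r. r \<noteq> 0 \<and> dotc a r = 0 \<and> dotc b r = 0 \<and> dotc c r = 0"
proof -
  have "det (rows3 a b c) = 0" using assms indep3c_det by blast
  then have "\<not> inj ((*v) (rows3 a b c))"
    using det_nz_iff_inj_gen[of "(*v) (rows3 a b c)"] matrix_of_matrix_vector_mul
    by (metis matrix_vector_mul_linear_gen)
  then obtain u v where "u \<noteq> v" "rows3 a b c *v u = rows3 a b c *v v" unfolding inj_def by blast
  then have "rows3 a b c *v (u - v) = 0" "u - v \<noteq> 0" by (simp_all add: matrix_vector_mult_diff_distrib)
  then show ?thesis unfolding rows3_mult vec3_eq0 by blast
qed

lemma orth2: "\<exists>r. r \<noteq> 0 \<and> dotc a r = 0 \<and> dotc b r = 0"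
proof -
  have "\<not> indep3c a b b" unfolding indep3c_def
    apply (simp) apply (rule exI[of _ 0], rule exI[of _ 1], rule exI[of _ "-1"]) by (simp add: vector_sneg_minus1[symmetric])
  then show ?thesis using not_indep3c_orth by blast
qed

lemma exhaust_6:
  fixes x :: 6
  shows "x = 1 \<or> x = 2 \<or> x = 3 \<or> x = 4 \<or> x = 5 \<or> x = 6"
proof (induct x)
  case (of_int z)
  then have "z = 0 \<or> z = 1 \<or> z = 2 \<or> z = 3 \<or> z = 4 \<or> z = 5" by fastforce
  then show ?case by auto
qed

lemma forall_6: "(\<forall>i::6. P i) \<longleftrightarrow> P 1 \<and> P 2 \<and> P 3 \<and> P 4 \<and> P 5 \<and> P 6"
  by (metis exhaust_6)

lemma vector_6 [simp]:
 "(vector [a,b,c,d,e,f] ::('a::zero)^6)$1 = a"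
 "(vector [a,b,c,d,e,f] ::('a::zero)^6)$2 = b"
 "(vector [a,b,c,d,e,f] ::('a::zero)^6)$3 = c"
 "(vector [a,b,c,d,e,f] ::('a::zero)^6)$4 = d"
 "(vector [a,b,c,d,e,f] ::('a::zero)^6)$5 = e"
 "(vector [a,b,c,d,e,f] ::('a::zero)^6)$6 = f"
  unfolding vector_def by simp_all

definition idx :: "3 \<Rightarrow> 3 \<Rightarrow> 6" where
  "idx i j = (if i = 1 \<and> j = 1 then 1 else if i = 2 \<and> j = 2 then 2 else if i = 3 \<and> j = 3 then 3
     else if (i = 1 \<and> j = 2) \<or> (i = 2 \<and> j = 1) then 4
     else if (i = 1 \<and> j = 3) \<or> (i = 3 \<and> j = 1) then 5 else 6)"

lemma idx_simps [simp]:
  "idx 1 1 = 1" "idx 2 2 = 2" "idx 3 3 = 3" "idx 1 2 = 4" "idx 2 1 = 4"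
  "idx 1 3 = 5" "idx 3 1 = 5" "idx 2 3 = 6" "idx 3 2 = 6"
  by (simp_all add: idx_def)

lemma idx_sym: "idx i j = idx j i"
  using exhaust_3[of i] exhaust_3[of j] by auto

lemma idx_surj: "\<exists>i j. idx i j = k"
  using exhaust_6[of k] by (metis idx_simps)

definition sig :: "complex^6 \<Rightarrow> complex^3^3" where "sig z = (\<chi> i j. z $ idx i j)"

lemma sig_nth [simp]: "sig z $ i $ j = z $ idx i j"
  by (simp add: sig_def)

lemma sig_sym: "sig z $ i $ j = sig z $ j $ i"
  by (simp add: idx_sym)

lemma sig_inj: "sig z = sig z' \<Longrightarrow> z = z'"
  unfolding vec_eq_iff by (metis idx_surj sig_nth)

definition outer :: "complex^3 \<Rightarrow> complex^3^3" where "outer u = (\<chi> i j. u$i * u$j)"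

lemma outer_nth [simp]: "outer u $ i $ j = u$i * u$j"
  by (simp add: outer_def)

lemma ver_idx: "ver y $ idx i j = y$i * y$j"
  using exhaust_3[of i] exhaust_3[of j] by (auto simp: ver_def mult.commute)

lemma sig_ver: "sig (ver y) = outer y"
  by (simp add: vec_eq_iff ver_idx)

definition sinv :: "complex^3^3 \<Rightarrow> complex^6" where
  "sinv M = vector [M$1$1, M$2$2, M$3$3, M$1$2, M$1$3, M$2$3]"

lemma sig_sinv: assumes "\<forall>i j. M$i$j = M$j$i" shows "sig (sinv M) = M"
  unfolding vec_eq_iff sig_nth forall_3 sinv_def using assms by simp

lemma sig_add: "sig (a + b) $ i $ j = sig a $ i $ j + sig b $ i $ j" by simp
lemma sig_smult: "sig (c *s a) $ i $ j = c * sig a $ i $ j" by simp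
lemma sig_diff: "sig (a - b) $ i $ j = sig a $ i $ j - sig b $ i $ j" by simp


lemma dotc_comm: "dotc a b = dotc b a"
  by (simp add: dotc_def mult.commute)

lemma dotc_lin: "dotc f (a *s x + b *s y) = a * dotc f x + b * dotc f y"
  by (simp add: dotc_3 algebra_simps)

lemma dotc_lin3: "dotc f (a *s x + b *s y + c *s z) = a * dotc f x + b * dotc f y + c * dotc f z"
  by (simp add: dotc_3 algebra_simps)

lemma dotc_axis: "dotc f (axis k 1) = f $ k"
proof -
  have "dotc f (axis k 1) = (\<Sum>i\<in>UNIV. if i = k then f$i else 0)"
    unfolding dotc_def axis_def by (intro sum.cong) auto
  then show ?thesis by simp
qed

lemma dotc_zero [simp]: "dotc f 0 = 0" "dotc 0 f = 0"
  by (simp_all add: dotc_def)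

lemma outer_mult: "outer v *v w = dotc v w *s v"
  by (simp add: vec_eq_iff matrix_vector_mult_def dotc_def sum_distrib_left mult_ac)

lemma mat_comb3:
  assumes "\<forall>i j. M$i$j = a * M1$i$j + b * M2$i$j + c * M3$i$j"
  shows "M *v w = a *s (M1 *v w) + b *s (M2 *v w) + c *s (M3 *v w)"
  using assms by (simp add: vec_eq_iff matrix_vector_mult_def sum.distrib sum_distrib_left algebra_simps)

definition bil :: "complex^3^3 \<Rightarrow> complex^3 \<Rightarrow> complex^3 \<Rightarrow> complex" where
  "bil M a b = dotc a (M *v b)"

lemma bil_outer: "bil (outer u) a b = dotc u a * dotc u b"
  by (simp add: bil_def outer_mult dotc_3 algebra_simps)

lemma bil_comb3:
  assumes "\<forall>i j. M$i$j = a * M1$i$j + b * M2$i$j + c * M3$i$j"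
  shows "bil M x y = a * bil M1 x y + b * bil M2 x y + c * bil M3 x y"
  unfolding bil_def mat_comb3[OF assms] by (simp add: dotc_3 algebra_simps)

lemma comb3_lin: "comb3 u1 u2 u3 (a *s x + b *s y + c *s z) =
    a *s comb3 u1 u2 u3 x + b *s comb3 u1 u2 u3 y + c *s comb3 u1 u2 u3 z"
  by (simp add: comb3_def vec_eq_iff algebra_simps)

lemma comb3_zero [simp]: "comb3 u1 u2 u3 0 = 0"
  by (simp add: comb3_def)

definition phi :: "complex^6^6 \<Rightarrow> complex^6 \<Rightarrow> complex^6 \<Rightarrow> complex^6 \<Rightarrow> complex^3 \<Rightarrow> complex^3^3" where
  "phi B u1 u2 u3 y = sig (B *v comb3 u1 u2 u3 y)"

lemma phi_comb3: "phi B u1 u2 u3 (a *s x + b *s y + c *s z) $ i $ j =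
   a * phi B u1 u2 u3 x $i$j + b * phi B u1 u2 u3 y $i$j + c * phi B u1 u2 u3 z $i$j"
  unfolding phi_def comb3_lin by (simp add: matrix_vector_right_distrib vector_scalar_commute)

lemma outer_smult: "outer (c *s v) $ i $ j = c^2 * outer v $ i $ j"
  by (simp add: power2_eq_square)

lemma comb3_inj0:
  assumes "indep3 u1 u2 u3" "comb3 u1 u2 u3 y = 0" shows "y = 0"
proof -
  have "y$1 = 0 \<and> y$2 = 0 \<and> y$3 = 0" using assms unfolding indep3_def comb3_def by blast
  then show ?thesis unfolding vec_eq_iff forall_3 by simp
qed

lemma phi_inj0:
  assumes "indep3 u1 u2 u3" "A ** B = mat 1" "phi B u1 u2 u3 y = 0" shows "y = 0"
proof -
  have "sig (B *v comb3 u1 u2 u3 y) = sig 0" using assms(3) unfolding phi_def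
    by (simp add: vec_eq_iff sig_def)
  then have "B *v comb3 u1 u2 u3 y = 0" using sig_inj by blast
  then have "A *v (B *v comb3 u1 u2 u3 y) = 0" by simp
  then have "comb3 u1 u2 u3 y = 0" using assms(2) by (simp add: matrix_vector_mul_assoc)
  then show ?thesis using comb3_inj0 assms(1) by blast
qed



definition bq :: "complex^3^3 \<Rightarrow> complex^3 \<Rightarrow> complex^3 \<Rightarrow> complex" where
  "bq Q a b = dotc a (Q *v b)"

lemma qf_bq: "(\<Sum>i\<in>UNIV. y$i * (Q *v y)$i) = bq Q y y"
  by (simp add: bq_def dotc_def)

lemma dotc_transpose: "dotc a (M *v b) = dotc (transpose M *v a) b"
  by (simp add: dotc_3 matrix_vector_mult_def sum_3 transpose_def algebra_simps)

lemma bq_dot: "transpose Q = Q \<Longrightarrow> bq Q a b = dotc (Q *v a) b"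
  by (metis bq_def dotc_transpose)

lemma bq_sym: "transpose Q = Q \<Longrightarrow> bq Q a b = bq Q b a"
  by (metis bq_def bq_dot dotc_comm)

lemma dotc_smult: "dotc f (a *s x) = a * dotc f x"
  by (simp add: dotc_3 algebra_simps)

lemma bq_lin_r: "bq Q d (a *s x + b *s y + c *s z) = a * bq Q d x + b * bq Q d y + c * bq Q d z"
  by (simp add: bq_def matrix_vector_right_distrib vector_scalar_commute dotc_lin3)

lemma bq_lin_l: "transpose Q = Q \<Longrightarrow> bq Q (a *s x + b *s y + c *s z) d = a * bq Q x d + b * bq Q y d + c * bq Q z d"
  by (metis bq_sym bq_lin_r)

lemma quad_root:
  fixes a b c s :: complex
  assumes "a \<noteq> 0" "s^2 = b^2 - a * c"
  shows "a * ((- b + s) / a)^2 + 2 * b * ((- b + s) / a) + c = 0"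
proof -
  have "a * ((- b + s) / a)^2 + 2 * b * ((- b + s) / a) + c = ((- b + s)^2 + 2 * b * (- b + s) + a * c) / a"
    using assms(1) by (simp add: power2_eq_square field_simps)
  also have "(- b + s)^2 + 2 * b * (- b + s) + a * c = s^2 - b^2 + a * c"
    by (simp add: power2_eq_square algebra_simps)
  finally show ?thesis using assms(2) by simp
qed

lemma exists_isotropic:
  assumes QT: "transpose Q = Q" shows "\<exists>y. y \<noteq> 0 \<and> bq Q y y = 0"
proof -
  have s: "Q$2$1 = Q$1$2" using QT unfolding vec_eq_iff transpose_def by simp
  show ?thesis
  proof (cases "Q$1$1 = 0")
    case True
    have "bq Q (vector [1,0,0]) (vector [1,0,0]) = 0"
      using True by (simp add: bq_def dotc_3 matrix_vector_mult_def sum_3)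
    moreover have "(vector [1,0,0] :: complex^3) \<noteq> 0" by (simp add: vec3_eq0)
    ultimately show ?thesis by blast
  next
    case False
    define r where "r = (- Q$1$2 + csqrt ((Q$1$2)^2 - Q$1$1 * Q$2$2)) / Q$1$1"
    have "Q$1$1 * r^2 + 2 * Q$1$2 * r + Q$2$2 = 0"
      unfolding r_def by (rule quad_root[OF False]) (simp add: power2_csqrt)
    moreover have "bq Q (vector [r,1,0]) (vector [r,1,0]) = r * (Q$1$1 * r + Q$1$2) + (Q$2$1 * r + Q$2$2)"
      by (simp add: bq_def dotc_3 matrix_vector_mult_def sum_3)
    ultimately have "bq Q (vector [r,1,0]) (vector [r,1,0]) = 0"
      using s by (simp add: algebra_simps power2_eq_square)
    moreover have "(vector [r,1,0] :: complex^3) \<noteq> 0" by (simp add: vec3_eq0)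
    ultimately show ?thesis by blast
  qed
qed

lemma vec_nonzero_ex: "(v::'a::zero^'n) \<noteq> 0 \<Longrightarrow> \<exists>k. v$k \<noteq> 0"
  by (simp add: vec_eq_iff)

lemma conic_points:
  assumes QT: "transpose Q = Q" and Qi: "invertible Q"
  shows "\<exists>y0 e c. y0 \<noteq> 0 \<and> bq Q y0 y0 = 0 \<and> indep3c y0 e c \<and> bq Q y0 e = 0 \<and> bq Q y0 c = 1"
proof -
  obtain y0 where y0: "y0 \<noteq> 0" "bq Q y0 y0 = 0" using exists_isotropic[OF QT] by blast
  define f where "f = Q *v y0"
  have "f \<noteq> 0"
  proof
    assume "f = 0"
    then have "Q *v y0 = Q *v 0" by (simp add: f_def)
    then show False using y0(1) inj_matrix_vector_mult[OF Qi] by (meson injD)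
  qed
  then obtain k where k: "f$k \<noteq> 0" using vec_nonzero_ex by blast
  obtain k' where k': "y0$k' \<noteq> 0" using y0(1) vec_nonzero_ex by blast
  define c where "c = (1 / f$k) *s axis k 1"
  define h where "h = (axis k' 1 :: complex^3)"
  have fc: "dotc f c = 1" using k by (simp add: c_def dotc_smult dotc_axis)
  have hy: "dotc h y0 = y0$k'" by (simp add: h_def dotc_comm dotc_axis)
  obtain e where e: "e \<noteq> 0" "dotc f e = 0" "dotc h e = 0" using orth2 by blast
  have fy: "dotc f y0 = 0" using y0(2) bq_dot[OF QT] f_def by simp
  have "indep3c y0 e c" unfolding indep3c_def
  proof (intro allI impI)
    fix x y z assume eq: "x *s y0 + y *s e + z *s c = 0"
    have "dotc f (x *s y0 + y *s e + z *s c) = z" by (simp only: dotc_lin3 fy e(2) fc) simp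
    then have z: "z = 0" using eq by simp
    have "dotc h (x *s y0 + y *s e + z *s c) = x * y0$k'" by (simp only: dotc_lin3 hy e(3) z) simp
    then have x: "x = 0" using eq k' by simp
    have "y *s e = 0" using eq x z by simp
    then have "y = 0" using e(1) by (simp add: vector_mul_eq_0)
    then show "x = 0 \<and> y = 0 \<and> z = 0" using x z by simp
  qed
  moreover have "bq Q y0 e = 0" "bq Q y0 c = 1" using e(2) fc bq_dot[OF QT] f_def by simp_all
  ultimately show ?thesis using y0 by blast
qed



lemma span2:
  assumes pair: "\<And>a b. a *s v1 + b *s v2 = 0 \<Longrightarrow> a = 0 \<and> b = 0"
    and w: "w \<noteq> 0" "dotc v1 w = 0" "dotc v2 w = 0" and x: "dotc x w = 0"
  shows "\<exists>a b. x = a *s v1 + b *s v2"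
proof -
  have "\<not> indep3c v1 v2 x" using indep3c_orth w x by blast
  then obtain p q r where pqr: "p *s v1 + q *s v2 + r *s x = 0" "\<not> (p = 0 \<and> q = 0 \<and> r = 0)"
    unfolding indep3c_def by blast
  have "r \<noteq> 0" using pqr pair by auto
  have h: "p * v1$i + q * v2$i + r * x$i = 0" for i using pqr(1) by (simp add: vec_eq_iff)
  have "x$i = (- p / r) * v1$i + (- q / r) * v2$i" for i
  proof -
    have "r * x$i + (p * v1$i + q * v2$i) = 0" using h[of i] by (metis add.commute)
    then have "r * x$i = - (p * v1$i + q * v2$i)" by (rule eq_neg_iff_add_eq_0[THEN iffD2])
    then have "x$i = - (p * v1$i + q * v2$i) / r" using \<open>r \<noteq> 0\<close> by (simp add: field_simps)
    then show ?thesis by (simp add: diff_divide_distrib)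
  qed
  then have "x = (- p / r) *s v1 + (- q / r) *s v2" by (simp add: vec_eq_iff)
  then show ?thesis by blast
qed

lemma classify:
  fixes A B :: "complex^6^6" and u1 u2 u3 :: "complex^6" and Q :: "complex^3^3" and V P :: "(complex^6) set"
  assumes BA: "B ** A = mat 1" and AB: "A ** B = mat 1"
    and Vd: "V = {A *v ver y | y. y \<noteq> 0}"
    and ind: "indep3 u1 u2 u3" and Pd: "P = {comb3 u1 u2 u3 y | y. y \<noteq> 0}"
    and QT: "transpose Q = Q" and Qi: "invertible Q"
    and Cd: "V \<inter> P = {comb3 u1 u2 u3 y | y. y \<noteq> 0 \<and> (\<Sum>i\<in>UNIV. y$i * (Q *v y)$i) = 0}"
  shows "\<exists>w. w \<noteq> 0 \<and> (\<forall>z. z \<in> P \<longleftrightarrow> z \<noteq> 0 \<and> sig (B *v z) *v w = 0)"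
proof -
  let ?phi = "phi B u1 u2 u3"
  have rank1: "\<exists>v. v \<noteq> 0 \<and> ?phi y = outer v" if "y \<noteq> 0" "bq Q y y = 0" for y
  proof -
    have "(\<Sum>i\<in>UNIV. y$i * (Q *v y)$i) = 0" using that(2) qf_bq by simp
    then have "comb3 u1 u2 u3 y \<in> {comb3 u1 u2 u3 y | y. y \<noteq> 0 \<and> (\<Sum>i\<in>UNIV. y$i * (Q *v y)$i) = 0}"
      using that(1) by blast
    then have "comb3 u1 u2 u3 y \<in> V \<inter> P" unfolding Cd .
    then obtain v where v: "v \<noteq> 0" "comb3 u1 u2 u3 y = A *v ver v" using Vd by blast
    have "B *v comb3 u1 u2 u3 y = ver v" using v(2) BA by (simp add: matrix_vector_mul_assoc)
    then show ?thesis using v(1) by (auto simp: phi_def sig_ver)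
  qed
  have phi0: "y = 0" if "?phi y = 0" for y using phi_inj0[OF ind AB that] .
  have phi0': "y = 0" if "\<forall>i j. ?phi y $ i $ j = 0" for y
    using phi0 that by (simp add: vec_eq_iff)
  obtain y0 e c where y0: "y0 \<noteq> 0" "bq Q y0 y0 = 0" and iec: "indep3c y0 e c"
     and ye: "bq Q y0 e = 0" and yc: "bq Q y0 c = 1"
    using conic_points[OF QT Qi] by blast
  have ey: "bq Q e y0 = 0" and cy: "bq Q c y0 = 1" and ce: "bq Q c e = bq Q e c"
    using ye yc bq_sym[OF QT, of e y0] bq_sym[OF QT, of c y0] bq_sym[OF QT, of c e] by simp_all
  define al where "al s = - (s^2 * bq Q e e + bq Q c c + 2 * s * bq Q e c) / 2" for s
  define Y where "Y s = al s *s y0 + s *s e + 1 *s c" for s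
  have Yq: "bq Q (Y s) (Y s) = 0" for s
  proof -
    have "bq Q (Y s) (Y s) = 2 * al s + s^2 * bq Q e e + 2 * s * bq Q e c + bq Q c c"
      unfolding Y_def bq_lin_l[OF QT] bq_lin_r
      using y0(2) ye yc ey cy ce by (simp add: algebra_simps power2_eq_square)
    also have "\<dots> = 0" unfolding al_def by (simp add: field_simps)
    finally show ?thesis .
  qed
  have Yne: "Y s \<noteq> 0" for s
  proof
    assume "Y s = 0"
    then have "al s *s y0 + s *s e + 1 *s c = 0" by (simp add: Y_def)
    then show False using iec[unfolded indep3c_def, rule_format, of "al s" s 1] by simp
  qed
  have ind123: "indep3c y0 (Y 0) (Y 1)" unfolding indep3c_def
  proof (intro allI impI)
    fix x y z assume h: "x *s y0 + y *s Y 0 + z *s Y 1 = 0"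
    have "x *s y0 + y *s Y 0 + z *s Y 1 = (x + y * al 0 + z * al 1) *s y0 + z *s e + (y + z) *s c"
      unfolding Y_def by (simp add: vec_eq_iff algebra_simps)
    then have "(x + y * al 0 + z * al 1) *s y0 + z *s e + (y + z) *s c = 0" using h by simp
    then have "x + y * al 0 + z * al 1 = 0 \<and> z = 0 \<and> y + z = 0" using iec[unfolded indep3c_def, rule_format, of "x + y * al 0 + z * al 1" z "y + z"] by blast
    then show "x = 0 \<and> y = 0 \<and> z = 0" by auto
  qed
  define k1 where "k1 = al (-1) - 2 * al 0 + al 1"
  have rel4: "Y (-1) = k1 *s y0 + 2 *s Y 0 + (-1) *s Y 1"
    unfolding Y_def k1_def by (simp add: vec_eq_iff algebra_simps)
  obtain v1 where v1: "v1 \<noteq> 0" "?phi y0 = outer v1" using rank1 y0 by blast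
  obtain v2 where v2: "v2 \<noteq> 0" "?phi (Y 0) = outer v2" using rank1 Yne Yq by blast
  obtain v3 where v3: "v3 \<noteq> 0" "?phi (Y 1) = outer v3" using rank1 Yne Yq by blast
  obtain v4 where v4: "v4 \<noteq> 0" "?phi (Y (-1)) = outer v4" using rank1 Yne Yq by blast
  have phi4: "\<forall>i j. outer v4 $i$j = k1 * outer v1 $i$j + 2 * outer v2 $i$j + (-1) * outer v3 $i$j"
  proof (intro allI)
    fix i j
    have "?phi (Y (-1)) $i$j = k1 * ?phi y0 $i$j + 2 * ?phi (Y 0) $i$j + (-1) * ?phi (Y 1) $i$j"
      unfolding rel4 by (rule phi_comb3)
    then show "outer v4 $i$j = k1 * outer v1 $i$j + 2 * outer v2 $i$j + (-1) * outer v3 $i$j"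
      by (simp only: v1(2) v2(2) v3(2) v4(2))
  qed
  have notind: "\<not> indep3c v1 v2 v3"
  proof
    assume i: "indep3c v1 v2 v3"
    obtain r2 where r2: "dotc v1 r2 = 0" "dotc v2 r2 = 1" "dotc v3 r2 = 0" using indep3c_dual[OF i] by blast
    obtain r3 where r3: "dotc v1 r3 = 0" "dotc v2 r3 = 0" "dotc v3 r3 = 1" using indep3c_dual[OF i] by blast
    have "bil (outer v4) r2 r3 = k1 * bil (outer v1) r2 r3 + 2 * bil (outer v2) r2 r3 + (-1) * bil (outer v3) r2 r3"
      by (rule bil_comb3[OF phi4])
    then have a: "dotc v4 r2 * dotc v4 r3 = 0" using r2 r3 by (simp add: bil_outer)
    have "bil (outer v4) r2 r2 = k1 * bil (outer v1) r2 r2 + 2 * bil (outer v2) r2 r2 + (-1) * bil (outer v3) r2 r2"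
      by (rule bil_comb3[OF phi4])
    then have b: "dotc v4 r2 * dotc v4 r2 = 2" using r2 by (simp add: bil_outer)
    have "bil (outer v4) r3 r3 = k1 * bil (outer v1) r3 r3 + 2 * bil (outer v2) r3 r3 + (-1) * bil (outer v3) r3 r3"
      by (rule bil_comb3[OF phi4])
    then have c: "dotc v4 r3 * dotc v4 r3 = -1" using r3 by (simp add: bil_outer)
    from a b c show False by auto
  qed
  obtain w where w: "w \<noteq> 0" "dotc v1 w = 0" "dotc v2 w = 0" "dotc v3 w = 0"
    using not_indep3c_orth[OF notind] by blast
  have pair: "a = 0 \<and> b = 0" if ab: "a *s v1 + b *s v2 = 0" for a b
  proof -
    have "a *s v1 = (-b) *s v2" using ab by (simp add: eq_neg_iff_add_eq_0)
    then have "\<forall>i j. outer (a *s v1) $i$j = outer ((-b) *s v2) $i$j" by simp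
    then have "\<forall>i j. a^2 * outer v1 $i$j = (-b)^2 * outer v2 $i$j" by (simp only: outer_smult simp_thms)
    then have "\<forall>i j. ?phi (a^2 *s y0 + (-(b^2)) *s Y 0 + 0 *s Y 1) $i$j = 0"
      unfolding phi_comb3 using v1 v2 by simp
    then have "a^2 *s y0 + (-(b^2)) *s Y 0 + 0 *s Y 1 = 0" using phi0' by blast
    then have "a^2 = 0 \<and> b^2 = 0" using ind123 unfolding indep3c_def by fastforce
    then show ?thesis by simp
  qed
  obtain \<alpha> \<beta> where ab3: "v3 = \<alpha> *s v1 + \<beta> *s v2" using span2[OF pair w(1,2,3) w(4)] by blast
  have o3: "outer v3 $i$j = \<alpha>^2 * outer v1 $i$j + \<beta>^2 * outer v2 $i$j + \<alpha> * \<beta> * (v1$i * v2$j + v2$i * v1$j)" for i j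
    unfolding ab3 by (simp add: algebra_simps power2_eq_square)
  have "\<alpha> \<noteq> 0"
  proof
    assume "\<alpha> = 0"
    then have "\<forall>i j. ?phi (0 *s y0 + (-(\<beta>^2)) *s Y 0 + 1 *s Y 1) $i$j = 0"
      unfolding phi_comb3 using v1 v2 v3 o3 by simp
    then have "0 *s y0 + (-(\<beta>^2)) *s Y 0 + 1 *s Y 1 = 0" using phi0' by blast
    then show False using ind123 unfolding indep3c_def by fastforce
  qed
  have "\<beta> \<noteq> 0"
  proof
    assume "\<beta> = 0"
    then have "\<forall>i j. ?phi ((-(\<alpha>^2)) *s y0 + 0 *s Y 0 + 1 *s Y 1) $i$j = 0"
      unfolding phi_comb3 using v1 v2 v3 o3 by simp
    then have "(-(\<alpha>^2)) *s y0 + 0 *s Y 0 + 1 *s Y 1 = 0" using phi0' by blast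
    then show False using ind123 unfolding indep3c_def by fastforce
  qed
  define ys where "ys = (-(\<alpha>^2)/(\<alpha>*\<beta>)) *s y0 + (-(\<beta>^2)/(\<alpha>*\<beta>)) *s Y 0 + (1/(\<alpha>*\<beta>)) *s Y 1"
  have phiS: "?phi ys $i$j = v1$i * v2$j + v2$i * v1$j" for i j
    unfolding ys_def phi_comb3 v1 v2 v3 o3 using \<open>\<alpha> \<noteq> 0\<close> \<open>\<beta> \<noteq> 0\<close>
    by (simp add: field_simps power2_eq_square)
  have all_w: "?phi y *v w = 0" for y
  proof -
    obtain a b d where y: "y = a *s y0 + b *s Y 0 + d *s Y 1" using indep3c_span[OF ind123] by blast
    have "?phi y *v w = a *s (outer v1 *v w) + b *s (outer v2 *v w) + d *s (outer v3 *v w)"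
      unfolding y v1(2)[symmetric] v2(2)[symmetric] v3(2)[symmetric]
      by (rule mat_comb3) (simp add: phi_comb3)
    then show ?thesis using w by (simp add: outer_mult)
  qed
  show ?thesis
  proof (intro exI conjI allI)
    show "w \<noteq> 0" by (rule w(1))
    fix z
    show "z \<in> P \<longleftrightarrow> z \<noteq> 0 \<and> sig (B *v z) *v w = 0"
    proof
      assume "z \<in> P"
      then obtain y where y: "y \<noteq> 0" "z = comb3 u1 u2 u3 y" using Pd by blast
      have "z \<noteq> 0" using y comb3_inj0[OF ind] by auto
      moreover have "sig (B *v z) *v w = 0" using all_w[of y] y(2) by (simp add: phi_def)
      ultimately show "z \<noteq> 0 \<and> sig (B *v z) *v w = 0" by blast
    next
      assume h: "z \<noteq> 0 \<and> sig (B *v z) *v w = 0"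
      define M where "M = sig (B *v z)"
      have Ms: "M$i$j = M$j$i" for i j unfolding M_def by (rule sig_sym)
      have Mw: "M *v w = 0" using h M_def by simp
      have col: "\<exists>p q. (\<chi> i. M$i$j) = p *s v1 + q *s v2" for j
      proof (rule span2[OF pair w(1,2,3)])
        have "dotc (\<chi> i. M$i$j) w = (M *v w) $ j"
          by (simp add: dotc_3 matrix_vector_mult_def sum_3 Ms[of _ j])
        then show "dotc (\<chi> i. M$i$j) w = 0" using Mw by simp
      qed
      obtain a where "\<forall>j. \<exists>q. (\<chi> i. M$i$j) = a j *s v1 + q *s v2" using choice[of "\<lambda>j p. \<exists>q. (\<chi> i. M$i$j) = p *s v1 + q *s v2"] col by blast
      then obtain b where bb: "\<forall>j. (\<chi> i. M$i$j) = a j *s v1 + b j *s v2" using choice[of "\<lambda>j q. (\<chi> i. M$i$j) = a j *s v1 + q *s v2"] by blast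
      have Mab: "M$i$j = a j * v1$i + b j * v2$i" for i j
      proof -
        have "(\<chi> i. M$i$j) $ i = (a j *s v1 + b j *s v2) $ i" using bb by simp
        then show ?thesis by simp
      qed
      define av where "av = (\<chi> j. a j)"
      define bv where "bv = (\<chi> j. b j)"
      have "M *v w = dotc av w *s v1 + dotc bv w *s v2"
        by (simp add: vec_eq_iff matrix_vector_mult_def Mab dotc_3 av_def bv_def sum_3 algebra_simps)
      then have "dotc av w = 0 \<and> dotc bv w = 0" using Mw pair by simp
      then obtain a1 a2 b1 b2 where a12: "av = a1 *s v1 + a2 *s v2" and b12: "bv = b1 *s v1 + b2 *s v2"
        using span2[OF pair w(1,2,3), of av] span2[OF pair w(1,2,3), of bv] by blast
      have Mij: "M$i$j = a1 * outer v1 $i$j + b2 * outer v2 $i$j + ((a2 + b1)/2) * (v1$i * v2$j + v2$i * v1$j)" for i j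
      proof -
        have aj: "a j = a1 * v1$j + a2 * v2$j" for j using a12 unfolding av_def vec_eq_iff by simp
        have bj: "b j = b1 * v1$j + b2 * v2$j" for j using b12 unfolding bv_def vec_eq_iff by simp
        have "M$i$j = (M$i$j + M$j$i) / 2" using Ms[of i j] by simp
        then show ?thesis unfolding Mab aj bj by (simp add: field_simps)
      qed
      define y where "y = a1 *s y0 + b2 *s Y 0 + ((a2 + b1)/2) *s ys"
      have "?phi y = M"
        unfolding vec_eq_iff y_def phi_comb3 v1(2) v2(2) phiS Mij by simp
      then have "sig (B *v comb3 u1 u2 u3 y) = sig (B *v z)" by (simp add: phi_def M_def)
      then have "B *v comb3 u1 u2 u3 y = B *v z" using sig_inj by blast
      then have "A *v (B *v comb3 u1 u2 u3 y) = A *v (B *v z)" by simp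
      then have zc: "z = comb3 u1 u2 u3 y" using AB by (simp add: matrix_vector_mul_assoc)
      then have "y \<noteq> 0" using h by auto
      then show "z \<in> P" using zc Pd by blast
    qed
  qed
qed



lemma polyfun_diff: "polyfun f \<Longrightarrow> polyfun g \<Longrightarrow> polyfun (\<lambda>x. f x - g x)"
proof -
  assume f: "polyfun f" and g: "polyfun g"
  have "polyfun (\<lambda>x. f x + (\<lambda>x. -1) x * g x)"
    by (intro pf_add pf_mult f g pf_const)
  then show ?thesis by simp
qed

lemma polyfun_cmult: "polyfun f \<Longrightarrow> polyfun (\<lambda>x. c * f x)"
  using pf_mult[OF pf_const] by blast

lemma polyfun_sum: "finite S \<Longrightarrow> (\<And>i. i \<in> S \<Longrightarrow> polyfun (f i)) \<Longrightarrow> polyfun (\<lambda>x. \<Sum>i\<in>S. f i x)"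
proof (induction S rule: finite_induct)
  case empty
  then show ?case using pf_const[of 0] by simp
next
  case (insert a S)
  then have "polyfun (\<lambda>x. f a x + (\<Sum>i\<in>S. f i x))" by (intro pf_add) auto
  then show ?case using insert by simp
qed

lemma polyfun_Bz: "polyfun (\<lambda>x. (B *v x) $ k)"
  unfolding matrix_vector_mult_def
  by (simp, rule polyfun_sum, simp, rule polyfun_cmult, rule pf_coord)

lemma polyfun_Bz': "polyfun (\<lambda>x. \<Sum>j\<in>UNIV. B $ k $ j * x $ j)"
  using polyfun_Bz[of B k] by (simp add: matrix_vector_mult_def)

lemma polyfun_X: "polyfun (\<lambda>x. sig (B *v x) $ i $ j)"
  by (simp add: polyfun_Bz)

lemma polyfun_bilX: "polyfun (\<lambda>x. bil (sig (B *v x)) a b)"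
  unfolding bil_def dotc_def matrix_vector_mult_def
  apply simp
  apply (rule polyfun_sum, simp)
  apply (rule polyfun_cmult)
  apply (rule polyfun_sum, simp)
  apply (rule pf_mult[OF _ pf_const])
  apply (rule polyfun_Bz')
  done

lemma polyfun_Xw: "polyfun (\<lambda>x. (sig (B *v x) *v w) $ k)"
  unfolding matrix_vector_mult_def
  apply simp
  apply (rule polyfun_sum, simp)
  apply (rule pf_mult[OF _ pf_const])
  apply (rule polyfun_Bz')
  done

lemma polyfun_detX: "polyfun (\<lambda>x. det (sig (B *v x)))"
  unfolding det_3
  by (intro polyfun_diff pf_add pf_mult polyfun_X)

lemma Xs: "sig (B *v (c *s x)) $ i $ j = c * sig (B *v x) $ i $ j"
  by (simp add: vector_scalar_commute)

lemma Xadd: "sig (B *v (x + y)) $ i $ j = sig (B *v x) $ i $ j + sig (B *v y) $ i $ j"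
  by (simp add: matrix_vector_right_distrib)

lemma Xdiff: "sig (B *v (x - y)) $ i $ j = sig (B *v x) $ i $ j - sig (B *v y) $ i $ j"
  by (simp add: matrix_vector_mult_diff_distrib)

lemma bil_scale: "(\<forall>i j. M$i$j = c * N$i$j) \<Longrightarrow> bil M a b = c * bil N a b"
  using bil_comb3[of M c N 0 N 0 N a b] by simp

lemma det_outer: "det (outer u) = 0"
  by (simp add: det_3 algebra_simps)

lemma det_outer2: "(\<forall>i j. M$i$j = outer u $i$j + outer v $i$j) \<Longrightarrow> det M = 0"
  by (simp add: det_3 algebra_simps)

lemma order_lin:
  fixes s :: "complex poly"
  assumes "poly s 0 \<noteq> 0" shows "order 0 ([:0, 1:] * s) = 1"
proof -
  have s0: "s \<noteq> 0" using assms by auto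
  have "order 0 ([:0, 1:] * s) = order 0 [:0, 1::complex:] + order 0 s"
    using s0 by (intro order_mult) (simp add: pCons_eq_0_iff)
  moreover have "order 0 s = 0" using assms by (simp add: order_root)
  moreover have "order 0 [:0, (1::complex):] = 1"
    using order_power_n_n[of 0 1] by simp
  ultimately show ?thesis by simp
qed




lemma sym_rank1:
  fixes M :: "complex^3^3"
  assumes sym: "\<forall>i j. M$i$j = M$j$i"
    and mn: "\<forall>i j k l. M$i$k * M$j$l - M$i$l * M$j$k = 0"
  shows "\<exists>u. M = outer u"
proof (cases "\<exists>i. M$i$i \<noteq> 0")
  case True
  then obtain i where i: "M$i$i \<noteq> 0" by blast
  define r where "r = csqrt (M$i$i)"
  have r2: "r * r = M$i$i" unfolding r_def using power2_csqrt[of "M$i$i"] by (simp add: power2_eq_square)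
  have r0: "r \<noteq> 0" using r2 i by auto
  define u where "u = (1 / r) *s (\<chi> j. M$j$i)"
  have "M$j$k = outer u $j$k" for j k
  proof -
    have "M$j$k * M$i$i - M$j$i * M$i$k = 0" using mn by blast
    then have "M$j$k = M$j$i * M$k$i / M$i$i" using i sym by (simp add: field_simps)
    then show ?thesis unfolding u_def outer_nth using r2 r0 by (simp add: field_simps)
  qed
  then show ?thesis by (auto simp: vec_eq_iff)
next
  case False
  have "M$j$k = 0" for j k
  proof -
    have "M$j$j * M$k$k - M$j$k * M$k$j = 0" using mn by blast
    then have "M$j$k * M$j$k = 0" using False sym by simp
    then show ?thesis by simp
  qed
  then have "M = outer 0" by (simp add: vec_eq_iff)
  then show ?thesis by blast
qed

lemma mat_axis: "(M *v axis i 1) $ k = M$k$i"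
proof -
  have "(M *v axis i 1) $ k = (\<Sum>j\<in>UNIV. M$k$j * (axis i 1)$j)"
    by (simp add: matrix_vector_mult_def)
  also have "\<dots> = (\<Sum>j\<in>UNIV. if j = i then M$k$j else 0)"
    by (rule sum.cong) (auto simp: axis_def)
  finally have "(M *v axis i 1) $ k = (\<Sum>j\<in>UNIV. if j = i then M$k$j else 0)" .
  then show ?thesis by simp
qed

lemma bil_axis: "bil M (axis i 1) (axis j 1) = (M$i$j :: complex)"
  unfolding bil_def by (simp add: dotc_comm[of "axis i 1"] dotc_axis mat_axis)

lemma dotc_add: "dotc (a + b) c = dotc a c + dotc b c" "dotc c (a + b) = dotc c a + dotc c b"
  by (simp_all add: dotc_3 algebra_simps)

lemma bil_add: "bil M (a + b) (a + b) = bil M a a + bil M a b + bil M b a + bil M b b"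
  unfolding bil_def by (simp add: matrix_vector_right_distrib dotc_add)

lemma sym_bil_nonzero:
  fixes M :: "complex^3^3"
  assumes sym: "\<forall>i j. M$i$j = M$j$i" and M0: "M \<noteq> 0"
  shows "\<exists>a. bil M a a \<noteq> 0"
proof (cases "\<exists>i. M$i$i \<noteq> 0")
  case True
  then obtain i where "M$i$i \<noteq> 0" by blast
  then show ?thesis using bil_axis[of M i i] by metis
next
  case False
  obtain i j where ij: "M$i$j \<noteq> 0" using M0 by (auto simp: vec_eq_iff)
  have "bil M (axis i 1 + axis j 1) (axis i 1 + axis j 1) = 2 * M$i$j"
    unfolding bil_add bil_axis using False sym by simp
  then show ?thesis using ij by (metis mult_eq_0_iff zero_neq_numeral)
qed

lemma outer_scale:
  assumes "\<forall>i j. M$i$j = t * outer v $i$j" shows "M = outer (csqrt t *s v)"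
proof -
  have "csqrt t * csqrt t = t" using power2_csqrt[of t] by (simp add: power2_eq_square)
  then show ?thesis using assms by (simp add: vec_eq_iff mult_ac)
qed

lemma line_comm: "line_through p q = line_through q p"
  unfolding line_through_def by (auto; metis add.commute)

lemma line_scale:
  assumes "s \<noteq> 0" "t \<noteq> 0" shows "line_through (s *s p) (t *s q) = line_through p q"
proof -
  have "line_through (s *s p) (t *s q) \<subseteq> line_through p q"
    unfolding line_through_def by (auto simp: vector_smult_assoc)
  moreover have "line_through p q \<subseteq> line_through (s *s p) (t *s q)"
  proof
    fix x assume "x \<in> line_through p q"
    then obtain a b where "x = a *s p + b *s q" unfolding line_through_def by blast
    then have "x = (a / s) *s (s *s p) + (b / t) *s (t *s q)" using assms by (simp add: vector_smult_assoc)
    then show "x \<in> line_through (s *s p) (t *s q)" unfolding line_through_def by blast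
  qed
  ultimately show ?thesis by blast
qed

lemma line_eq:
  assumes ab: "indep2 a b" and pq: "indep2 p q"
    and p: "p \<in> line_through a b" and q: "q \<in> line_through a b"
  shows "line_through a b = line_through p q"
proof -
  obtain a1 b1 where p1: "p = a1 *s a + b1 *s b" using p unfolding line_through_def by blast
  obtain a2 b2 where q1: "q = a2 *s a + b2 *s b" using q unfolding line_through_def by blast
  define D where "D = a1 * b2 - a2 * b1"
  have D0: "D \<noteq> 0"
  proof
    assume D: "D = 0"
    have "b2 *s p + (- b1) *s q = D *s a + 0 *s b"
      unfolding p1 q1 D_def by (simp add: vec_eq_iff algebra_simps)
    then have "b2 *s p + (- b1) *s q = 0" using D by simp
    then have "b2 = 0 \<and> b1 = 0" using pq unfolding indep2_def by fastforce
    moreover have "a2 *s p + (- a1) *s q = 0 *s a + (- D) *s b"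
      unfolding p1 q1 D_def by (simp add: vec_eq_iff algebra_simps)
    then have "a2 *s p + (- a1) *s q = 0" using D by simp
    then have "a2 = 0 \<and> a1 = 0" using pq unfolding indep2_def by fastforce
    ultimately have "p = 0" using p1 by simp
    then have "1 *s p + 0 *s q = 0" by simp
    then show False using pq unfolding indep2_def by fastforce
  qed
  have Da: "b2 *s p + (- b1) *s q = D *s a"
    unfolding p1 q1 D_def by (simp add: vec_eq_iff algebra_simps)
  have Db: "(- a2) *s p + a1 *s q = D *s b"
    unfolding p1 q1 D_def by (simp add: vec_eq_iff algebra_simps)
  have ea: "a = (b2 / D) *s p + (- b1 / D) *s q"
  proof -
    have "\<forall>i. (b2 *s p + (- b1) *s q)$i = (D *s a)$i" using Da by simp
    then have "\<forall>i. a$i = (b2 / D) * p$i + (- b1 / D) * q$i" using D0 by (simp add: field_simps)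
    then show ?thesis by (simp add: vec_eq_iff)
  qed
  have eb: "b = (- a2 / D) *s p + (a1 / D) *s q"
  proof -
    have "\<forall>i. ((- a2) *s p + a1 *s q)$i = (D *s b)$i" using Db by simp
    then have "\<forall>i. b$i = (- a2 / D) * p$i + (a1 / D) * q$i" using D0 by (simp add: field_simps)
    then show ?thesis by (simp add: vec_eq_iff)
  qed
  show ?thesis
  proof
    show "line_through a b \<subseteq> line_through p q"
    proof
      fix x assume "x \<in> line_through a b"
      then obtain s t where "x = s *s a + t *s b" unfolding line_through_def by blast
      then have "x = (s * (b2 / D) + t * (- a2 / D)) *s p + (s * (- b1 / D) + t * (a1 / D)) *s q"
        unfolding ea eb by (simp add: vec_eq_iff algebra_simps)
      then show "x \<in> line_through p q" unfolding line_through_def by blast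
    qed
    show "line_through p q \<subseteq> line_through a b"
    proof
      fix x assume "x \<in> line_through p q"
      then obtain s t where "x = s *s p + t *s q" unfolding line_through_def by blast
      then have "x = (s * a1 + t * a2) *s a + (s * b1 + t * b2) *s b"
        unfolding p1 q1 by (simp add: vec_eq_iff algebra_simps)
      then show "x \<in> line_through a b" unfolding line_through_def by blast
    qed
  qed
qed





locale vsetup =
  fixes A B :: "complex^6^6" and w :: "complex^3" and V P :: "(complex^6) set"
  assumes BA: "B ** A = mat 1" and AB: "A ** B = mat 1"
    and Vd: "V = {A *v ver y | y. y \<noteq> 0}"
    and w0: "w \<noteq> 0" and Pc: "\<forall>z. z \<in> P \<longleftrightarrow> z \<noteq> 0 \<and> sig (B *v z) *v w = 0"
begin

abbreviation X where "X z \<equiv> sig (B *v z)"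

definition kap where "kap z = bil (X z) w w"

lemma X_inj: assumes "X z = X z'" shows "z = z'"
proof -
  have "B *v z = B *v z'" using assms sig_inj by blast
  then have "A *v (B *v z) = A *v (B *v z')" by simp
  then show ?thesis using AB by (simp add: matrix_vector_mul_assoc)
qed

lemma X_ver: "X (A *v ver u) = outer u"
  using BA by (simp add: matrix_vector_mul_assoc sig_ver)

lemma inV: "z \<in> V \<longleftrightarrow> (\<exists>u. u \<noteq> 0 \<and> X z = outer u)"
proof
  assume "z \<in> V"
  then obtain u where "u \<noteq> 0" "z = A *v ver u" using Vd by blast
  then show "\<exists>u. u \<noteq> 0 \<and> X z = outer u" using X_ver by blast
next
  assume "\<exists>u. u \<noteq> 0 \<and> X z = outer u"
  then obtain u where u: "u \<noteq> 0" "X z = outer u" by blast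
  then have "X z = X (A *v ver u)" using X_ver by simp
  then have "z = A *v ver u" using X_inj by blast
  then show "z \<in> V" using Vd u(1) by blast
qed

lemma inP: "z \<in> P \<longleftrightarrow> z \<noteq> 0 \<and> X z *v w = 0"
  using Pc by blast

lemma X0: "X 0 = 0"
  by (simp add: vec_eq_iff)

lemma X_sym: "\<forall>i j. X z $i$j = X z $j$i"
  using sig_sym by blast

lemma kap_P: "z \<in> P \<Longrightarrow> kap z = 0"
  using inP by (simp add: kap_def bil_def)

lemma vf:
  fixes Qd Ln :: "complex^6 \<Rightarrow> complex"
  assumes "polyfun Qd" "polyfun Ln" "\<And>c x. Qd (c *s x) = c^2 * Qd x" "\<And>c x. Ln (c *s x) = c * Ln x"
    "\<And>z. z \<in> V \<Longrightarrow> Qd z = 0" "\<And>z. z \<in> P \<Longrightarrow> Ln z = 0"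
  shows "vanishing_form (V \<union> P) (\<lambda>x. Qd x * Ln x)"
  unfolding vanishing_form_def homogeneous_form_def
proof (intro conjI exI allI ballI)
  show "polyfun (\<lambda>x. Qd x * Ln x)" using assms by (intro pf_mult)
  fix c x
  show "Qd (c *s x) * Ln (c *s x) = c ^ 3 * (Qd x * Ln x)"
    using assms(3,4) by (simp add: power2_eq_square power3_eq_cube)
next
  fix x assume "x \<in> V \<union> P" then show "Qd x * Ln x = 0" using assms(5,6) by auto
qed

definition minorF where "minorF i j k l z = X z$i$k * X z$j$l - X z$i$l * X z$j$k"
definition GF where "GF a z = bil (X z) w w * bil (X z) a a - (bil (X z) w a)^2"
definition HF where "HF k z = (X z *v w)$k"

lemma minorF_pf: "polyfun (minorF i j k l)"
  unfolding minorF_def by (intro polyfun_diff pf_mult polyfun_X)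

lemma minorF_h: "minorF i j k l (c *s x) = c^2 * minorF i j k l x"
  unfolding minorF_def Xs by (simp add: power2_eq_square algebra_simps)

lemma minorF_V: "z \<in> V \<Longrightarrow> minorF i j k l z = 0"
  unfolding inV minorF_def by (auto simp del: sig_nth simp: mult_ac)

lemma bilX_h: "bil (X (c *s x)) a b = c * bil (X x) a b"
  by (rule bil_scale) (simp add: Xs del: sig_nth)

lemma GF_pf: "polyfun (GF a)"
  unfolding GF_def power2_eq_square by (intro polyfun_diff pf_mult polyfun_bilX)

lemma GF_h: "GF a (c *s x) = c^2 * GF a x"
  unfolding GF_def bilX_h by (simp add: power2_eq_square algebra_simps)

lemma GF_V: "z \<in> V \<Longrightarrow> GF a z = 0"
  unfolding inV GF_def by (auto simp: bil_outer power2_eq_square)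

lemma HF_pf: "polyfun (HF k)"
  unfolding HF_def by (rule polyfun_Xw)

lemma HF_h: "HF k (c *s x) = c * HF k x"
proof -
  have "X (c *s x) *v w = c *s (X x *v w) + 0 *s (X x *v w) + 0 *s (X x *v w)"
    by (rule mat_comb3) (simp add: Xs del: sig_nth)
  then show ?thesis unfolding HF_def by simp
qed

lemma HF_P: "z \<in> P \<Longrightarrow> HF k z = 0"
  unfolding HF_def inP by simp

lemma kap_pf: "polyfun kap"
  unfolding kap_def by (rule polyfun_bilX)

lemma kap_h: "kap (c *s x) = c * kap x"
  unfolding kap_def bilX_h ..

lemma zero_set:
  assumes y0: "y \<noteq> 0" and Z: "\<forall>F. vanishing_form (V \<union> P) F \<longrightarrow> F y = 0"
  shows "y \<in> V \<union> P"
proof (rule ccontr)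
  assume n: "y \<notin> V \<union> P"
  then have "X y *v w \<noteq> 0" using y0 inP by blast
  then obtain k where k: "HF k y \<noteq> 0" unfolding HF_def by (auto simp: vec_eq_iff)
  have "\<exists>i j k l. minorF i j k l y \<noteq> 0"
  proof (rule ccontr)
    assume "\<not> (\<exists>i j k l. minorF i j k l y \<noteq> 0)"
    then have "\<forall>i j k l. X y$i$k * X y$j$l - X y$i$l * X y$j$k = 0" unfolding minorF_def by blast
    then obtain u where u: "X y = outer u" using sym_rank1 X_sym by blast
    have "u \<noteq> 0"
    proof
      assume "u = 0"
      then have "X y = X 0" using u X0 by (simp add: vec_eq_iff)
      then show False using X_inj y0 by blast
    qed
    then have "y \<in> V" using inV u by blast
    then show False using n by blast
  qed
  then obtain i j k' l where m: "minorF i j k' l y \<noteq> 0" by blast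
  have "vanishing_form (V \<union> P) (\<lambda>x. minorF i j k' l x * HF k x)"
    by (rule vf[OF minorF_pf HF_pf minorF_h HF_h minorF_V HF_P])
  then have "minorF i j k' l y * HF k y = 0" using Z by blast
  then show False using m k by simp
qed


lemma Xlin: "X (s *s a + t *s b) $i$j = s * X a $i$j + t * X b $i$j"
  by (simp add: matrix_vector_right_distrib vector_scalar_commute)

lemma outer_eq0: "outer v = 0 \<Longrightarrow> v = 0"
  by (simp add: vec_eq_iff)

lemma vanish_scale:
  assumes "vanishing_form W F" "z \<in> W" shows "F (c *s z) = 0"
  using assms unfolding vanishing_form_def homogeneous_form_def by auto

lemma indep2_nz: "indep2 a b \<Longrightarrow> a \<noteq> 0 \<and> b \<noteq> 0"
  unfolding indep2_def by (metis one_neq_zero add_0 add.commute vector_smult_lzero vector_smult_lid vector_smult_rzero)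

lemma main_x:
  assumes x0: "x \<noteq> 0" and k0: "kap x \<noteq> 0" and d0: "det (X x) \<noteq> 0"
  shows "\<exists>!L. secant_line (V \<union> P) L \<and> x \<in> L"
proof -
  define \<kappa> where "\<kappa> = kap x"
  define sq where "sq = csqrt \<kappa>"
  have sq2: "sq * sq = \<kappa>" using power2_csqrt[of \<kappa>] unfolding sq_def by (simp add: power2_eq_square)
  have k0': "\<kappa> \<noteq> 0" using k0 \<kappa>_def by simp
  have sq0: "sq \<noteq> 0" using sq2 k0' by auto
  have kdot: "dotc (X x *v w) w = \<kappa>" unfolding \<kappa>_def kap_def bil_def by (rule dotc_comm)
  define v where "v = (1/sq) *s (X x *v w)"
  have vw: "dotc v w = sq"
  proof -
    have "dotc v w = dotc w v" by (rule dotc_comm)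
    also have "\<dots> = (1/sq) * \<kappa>" unfolding v_def dotc_smult \<kappa>_def kap_def bil_def ..
    also have "\<dots> = sq" using sq2 sq0 by (simp add: field_simps)
    finally show ?thesis .
  qed
  have v0: "v \<noteq> 0" using vw sq0 by auto
  define p where "p = A *v ver v"
  define q where "q = x - p"
  have Xp: "X p = outer v" unfolding p_def by (rule X_ver)
  have pV: "p \<in> V" using inV Xp v0 by blast
  have p0: "p \<noteq> 0" using Xp X0 v0 outer_eq0 by auto
  have Xq: "X q $i$j = X x$i$j - outer v$i$j" for i j unfolding q_def Xdiff Xp ..
  have Xqw: "X q *v w = 0"
  proof -
    have "X q *v w = 1 *s (X x *v w) + (-1) *s (outer v *v w) + 0 *s (outer v *v w)"
      by (rule mat_comb3) (simp add: Xq del: sig_nth)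
    also have "\<dots> = 0" unfolding outer_mult vw using sq0 by (simp add: v_def vec_eq_iff)
    finally show ?thesis .
  qed
  have nr1: "\<not> (\<exists>u. X x = outer u)" using d0 det_outer by auto
  have q0: "q \<noteq> 0"
  proof
    assume "q = 0" then have "x = p" by (simp add: q_def)
    then show False using nr1 Xp by blast
  qed
  have qP: "q \<in> P" using inP q0 Xqw by blast
  have Xq_nr1: "\<not> (\<exists>u. \<forall>i j. X q $i$j = outer u $i$j)"
  proof
    assume "\<exists>u. \<forall>i j. X q $i$j = outer u $i$j"
    then obtain u where u: "\<forall>i j. X q $i$j = outer u $i$j" by blast
    have "\<forall>i j. X x $i$j = outer u $i$j + outer v $i$j" using u Xq by (metis diff_add_cancel)
    then show False using det_outer2 d0 by blast
  qed
  have Xq0: "X q \<noteq> 0"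
  proof
    assume "X q = 0"
    then have "\<forall>i j. X q $i$j = outer 0 $i$j" by simp
    then show False using Xq_nr1 by blast
  qed
  have Xq_sym: "\<forall>i j. X q $i$j = X q $j$i" by (rule X_sym)
  have indpq: "indep2 p q" unfolding indep2_def
  proof (intro allI impI)
    fix c1 c2 assume h: "c1 *s p + c2 *s q = 0"
    have c2: "c2 = 0"
    proof (rule ccontr)
      assume c2: "c2 \<noteq> 0"
      have "c2 *s x = (c2 - c1) *s p" using h unfolding q_def by (simp add: vec_eq_iff algebra_simps)
      then have "x = ((c2 - c1) / c2) *s p" using c2 by (simp add: vec_eq_iff field_simps)
      then have "\<forall>i j. X x $i$j = ((c2 - c1) / c2) * outer v $i$j" using Xp by (simp only: Xs simp_thms)
      then have "X x = outer (csqrt ((c2 - c1) / c2) *s v)" by (rule outer_scale)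
      then show False using nr1 by blast
    qed
    then have "c1 *s p = 0" using h by simp
    then have "c1 = 0" using p0 by (simp add: vector_mul_eq_0)
    then show "c1 = 0 \<and> c2 = 0" using c2 by simp
  qed
  define L where "L = line_through p q"
  have xL: "x \<in> L" unfolding L_def line_through_def
    by (rule CollectI, rule exI[of _ 1], rule exI[of _ 1]) (simp add: q_def)
  have pL: "p \<in> L" unfolding L_def line_through_def
    by (rule CollectI, rule exI[of _ 1], rule exI[of _ 0]) simp
  have qL: "q \<in> L" unfolding L_def line_through_def
    by (rule CollectI, rule exI[of _ 0], rule exI[of _ 1]) simp
  have Xpq: "X (s *s p + t *s q) $i$j = s * outer v $i$j + t * X q $i$j" for s t i j
    unfolding Xlin Xp ..
  have Xpqw: "X (s *s p + t *s q) *v w = (s * sq) *s v" for s t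
  proof -
    have "X (s *s p + t *s q) *v w = s *s (outer v *v w) + t *s (X q *v w) + 0 *s (X q *v w)"
      by (rule mat_comb3) (simp only: Xpq, simp)
    then show ?thesis using Xqw vw by (simp add: outer_mult)
  qed
  have zc: "(\<forall>F. vanishing_form (V \<union> P) F \<longrightarrow> F y = 0) \<longleftrightarrow> (\<exists>c. y = c *s p \<or> y = c *s q)"
    if yL: "y \<in> L" and y0: "y \<noteq> 0" for y
  proof
    assume "\<exists>c. y = c *s p \<or> y = c *s q"
    then obtain c where "y = c *s p \<or> y = c *s q" by blast
    then show "\<forall>F. vanishing_form (V \<union> P) F \<longrightarrow> F y = 0"
      using vanish_scale pV qP by blast
  next
    assume Z: "\<forall>F. vanishing_form (V \<union> P) F \<longrightarrow> F y = 0"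
    then have yW: "y \<in> V \<union> P" using zero_set y0 by blast
    obtain s t where y: "y = s *s p + t *s q" using yL unfolding L_def line_through_def by blast
    have Xyw: "X y *v w = (s * sq) *s v" unfolding y by (rule Xpqw)
    show "\<exists>c. y = c *s p \<or> y = c *s q"
    proof (cases "y \<in> P")
      case True
      then have "(s * sq) *s v = 0" using inP Xyw by simp
      then have "s = 0" using v0 sq0 by (simp add: vector_mul_eq_0)
      then show ?thesis using y by auto
    next
      case False
      then have "y \<in> V" using yW by blast
      then obtain u where u: "u \<noteq> 0" "X y = outer u" using inV by blast
      have uw: "dotc u w *s u = (s * sq) *s v" using Xyw u(2) by (simp add: outer_mult)
      show ?thesis
      proof (cases "dotc u w = 0")
        case True
        then have "(s * sq) *s v = 0" using uw by simp
        then have "s = 0" using v0 sq0 by (simp add: vector_mul_eq_0)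
        then show ?thesis using y by auto
      next
        case False
        define lam where "lam = s * sq / dotc u w"
        have ul: "u = lam *s v"
        proof -
          have "(1 / dotc u w) *s (dotc u w *s u) = (1 / dotc u w) *s ((s * sq) *s v)" using uw by simp
          then show ?thesis using False unfolding lam_def by (simp add: vector_smult_assoc)
        qed
        have rel: "\<forall>i j. t * X q $i$j = (lam^2 - s) * outer v $i$j"
        proof (intro allI)
          fix i j
          have "X y $i$j = s * outer v $i$j + t * X q $i$j" unfolding y by (rule Xpq)
          moreover have "X y $i$j = lam^2 * outer v $i$j" using u(2) ul outer_smult by simp
          ultimately show "t * X q $i$j = (lam^2 - s) * outer v $i$j" by (simp add: algebra_simps)
        qed
        define N where "N = (\<chi> i j. t * X q $i$j)"
        have "N *v w = t *s (X q *v w) + 0 *s (X q *v w) + 0 *s (X q *v w)"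
          by (rule mat_comb3) (simp add: N_def del: sig_nth)
        moreover have "N *v w = (lam^2 - s) *s (outer v *v w) + 0 *s (X q *v w) + 0 *s (X q *v w)"
          by (rule mat_comb3) (simp add: N_def rel del: sig_nth)
        ultimately have "((lam^2 - s) * sq) *s v = 0" using Xqw vw by (simp add: outer_mult vector_smult_assoc)
        then have ls: "lam^2 - s = 0" using v0 sq0 by (simp add: vector_mul_eq_0)
        have "t = 0"
        proof (rule ccontr)
          assume "t \<noteq> 0"
          then have "\<forall>i j. X q $i$j = 0" using rel ls by simp
          then show False using Xq0 by (simp add: vec_eq_iff)
        qed
        then show ?thesis using y by auto
      qed
    qed
  qed
  obtain a where a: "bil (X q) a a \<noteq> 0" using sym_bil_nonzero[OF Xq_sym Xq0] by blast
  define \<beta> where "\<beta> = bil (X q) a a"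
  have bilpq: "bil (X (1 *s p + t *s q)) c d = bil (outer v) c d + t * bil (X q) c d" for t c d
  proof -
    have "bil (X (1 *s p + t *s q)) c d = 1 * bil (outer v) c d + t * bil (X q) c d + 0 * bil (X q) c d"
      by (rule bil_comb3) (simp only: Xpq, simp)
    then show ?thesis by simp
  qed
  have bqw: "bil (X q) w d = 0" "bil (X q) d w = 0" for d
  proof -
    have tq: "transpose (X q) = X q" using Xq_sym by (simp add: vec_eq_iff transpose_def del: sig_nth)
    show "bil (X q) w d = 0" unfolding bil_def dotc_transpose[of w] tq Xqw by simp
    show "bil (X q) d w = 0" unfolding bil_def Xqw by simp
  qed
  have sim1: "simple_at (V \<union> P) p q"
    unfolding simple_at_def
  proof (intro exI conjI allI)
    show "vanishing_form (V \<union> P) (\<lambda>z. GF a z * kap z)"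
      by (rule vf[OF GF_pf kap_pf GF_h kap_h GF_V kap_P])
    fix t
    have "GF a (p + t *s q) * kap (p + t *s q) = GF a (1 *s p + t *s q) * kap (1 *s p + t *s q)" by simp
    also have "\<dots> = t * (\<kappa> * \<kappa> * \<beta>)"
      unfolding GF_def kap_def bilpq bqw bil_outer \<beta>_def
      using vw sq2 by (simp add: dotc_comm[of w] power2_eq_square algebra_simps)
    finally show "poly ([:0, 1:] * [:\<kappa> * \<kappa> * \<beta>:]) t = GF a (p + t *s q) * kap (p + t *s q)"
      by simp
  next
    show "order 0 ([:0, 1:] * [:\<kappa> * \<kappa> * \<beta>:]) = 1"
      by (rule order_lin) (simp add: k0' a \<beta>_def)
  qed
  have "\<exists>i j k l. minorF i j k l q \<noteq> 0"
  proof (rule ccontr)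
    assume "\<not> (\<exists>i j k l. minorF i j k l q \<noteq> 0)"
    then have "\<forall>i j k l. X q$i$k * X q$j$l - X q$i$l * X q$j$k = 0" unfolding minorF_def by blast
    then obtain u where "X q = outer u" using sym_rank1 Xq_sym by blast
    then have "\<forall>i j. X q $i$j = outer u $i$j" by (simp del: sig_nth outer_nth)
    then show False using Xq_nr1 by blast
  qed
  then obtain i j k l where m0: "minorF i j k l q \<noteq> 0" by blast
  have Xqp: "X (1 *s q + t *s p) $i$j = X q $i$j + t * outer v $i$j" for t i j
    unfolding Xlin Xp by simp
  define M where "M = X q"
  define Nn where "Nn = outer v"
  define m0' where "m0' = M$i$k * M$j$l - M$i$l * M$j$k"
  define m1 where "m1 = M$i$k * Nn$j$l + Nn$i$k * M$j$l - M$i$l * Nn$j$k - Nn$i$l * M$j$k"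
  define m2 where "m2 = Nn$i$k * Nn$j$l - Nn$i$l * Nn$j$k"
  have m0'0: "m0' \<noteq> 0" using m0 unfolding m0'_def M_def minorF_def .
  have kqp: "kap (1 *s q + t *s p) = t * \<kappa>" for t
  proof -
    have "kap (1 *s q + t *s p) = 1 * bil (X q) w w + t * bil (outer v) w w + 0 * bil (X q) w w"
      unfolding kap_def by (rule bil_comb3) (simp only: Xqp, simp)
    then show ?thesis using bqw vw sq2 by (simp add: bil_outer dotc_comm[of w])
  qed
  have sim2: "simple_at (V \<union> P) q p"
    unfolding simple_at_def
  proof (intro exI conjI allI)
    show "vanishing_form (V \<union> P) (\<lambda>z. minorF i j k l z * kap z)"
      by (rule vf[OF minorF_pf kap_pf minorF_h kap_h minorF_V kap_P])
    fix t
    have "minorF i j k l (q + t *s p) * kap (q + t *s p) = minorF i j k l (1 *s q + t *s p) * kap (1 *s q + t *s p)" by simp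
    also have "\<dots> = t * (\<kappa> * m0' + t * (\<kappa> * m1 + t * (\<kappa> * m2)))"
      unfolding kqp minorF_def Xqp m0'_def m1_def m2_def M_def Nn_def
      by (simp add: algebra_simps del: outer_nth sig_nth)
    finally show "poly ([:0, 1:] * [:\<kappa> * m0', \<kappa> * m1, \<kappa> * m2:]) t = minorF i j k l (q + t *s p) * kap (q + t *s p)"
      by simp
  next
    show "order 0 ([:0, 1:] * [:\<kappa> * m0', \<kappa> * m1, \<kappa> * m2:]) = 1"
      by (rule order_lin) (simp add: k0' m0'0)
  qed
  have sec: "secant_line (V \<union> P) L"
    unfolding secant_line_def
  proof (intro conjI)
    show "\<exists>a b. indep2 a b \<and> L = line_through a b" using indpq L_def by blast
    show "\<exists>p q. indep2 p q \<and> p \<in> L \<and> q \<in> L \<and>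
        (\<forall>x\<in>L. x \<noteq> 0 \<longrightarrow> ((\<forall>F. vanishing_form (V \<union> P) F \<longrightarrow> F x = 0) = (\<exists>c. x = c *s p \<or> x = c *s q))) \<and>
        simple_at (V \<union> P) p q \<and> simple_at (V \<union> P) q p"
      using indpq pL qL zc sim1 sim2 by blast
  qed
  have VPcase: "line_through p1 q1 = L" if p1V: "p1 \<in> V" and q1P: "q1 \<in> P" and xst: "x = s *s p1 + t *s q1" for p1 q1 s t
  proof -
    obtain v1 where v1: "v1 \<noteq> 0" "X p1 = outer v1" using inV p1V by blast
    have q1w: "X q1 *v w = 0" using inP q1P by blast
    define \<delta> where "\<delta> = dotc v1 w"
    have Xx: "X x $i$j = s * outer v1 $i$j + t * X q1 $i$j" for i j unfolding xst Xlin v1(2) ..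
    have Xxw: "X x *v w = (s * \<delta>) *s v1"
    proof -
      have "X x *v w = s *s (outer v1 *v w) + t *s (X q1 *v w) + 0 *s (X q1 *v w)"
        by (rule mat_comb3) (simp only: Xx, simp)
      then show ?thesis using q1w by (simp add: outer_mult \<delta>_def vector_smult_assoc)
    qed
    have kk: "\<kappa> = s * \<delta> * \<delta>"
    proof -
      have "\<kappa> = dotc ((s * \<delta>) *s v1) w" using kdot Xxw by simp
      also have "\<dots> = dotc w ((s * \<delta>) *s v1)" by (rule dotc_comm)
      also have "\<dots> = (s * \<delta>) * dotc w v1" by (rule dotc_smult)
      also have "\<dots> = s * \<delta> * \<delta>" unfolding \<delta>_def using dotc_comm[of w v1] by simp
      finally show ?thesis .
    qed
    have "s \<noteq> 0" "\<delta> \<noteq> 0" using kk k0' by auto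
    have vv: "v = (s * \<delta> / sq) *s v1" unfolding v_def Xxw by (simp add: vector_smult_assoc)
    have "\<forall>i j. X p $i$j = X (s *s p1) $i$j"
    proof (intro allI)
      fix i j
      have "X p $i$j = (s * \<delta> / sq)^2 * outer v1 $i$j" unfolding Xp vv by (rule outer_smult)
      also have "(s * \<delta> / sq)^2 = s" using sq2 kk sq0 \<open>s \<noteq> 0\<close> \<open>\<delta> \<noteq> 0\<close>
        by (simp add: power2_eq_square field_simps)
      finally show "X p $i$j = X (s *s p1) $i$j" using v1(2) by (simp only: Xs simp_thms)
    qed
    then have "X p = X (s *s p1)" by (simp add: vec_eq_iff del: sig_nth)
    then have pp: "p = s *s p1" using X_inj by blast
    have qq: "q = t *s q1" unfolding q_def xst pp by simp
    have "t \<noteq> 0" using q0 qq by auto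
    have "line_through p1 q1 = line_through (s *s p1) (t *s q1)"
      using line_scale[OF \<open>s \<noteq> 0\<close> \<open>t \<noteq> 0\<close>] by simp
    then show ?thesis unfolding L_def pp qq .
  qed
  show ?thesis
  proof (rule ex1I[of _ L])
    show "secant_line (V \<union> P) L \<and> x \<in> L" using sec xL by blast
    fix L' assume h: "secant_line (V \<union> P) L' \<and> x \<in> L'"
    then obtain a b where ab: "indep2 a b" "L' = line_through a b" unfolding secant_line_def by blast
    obtain p1 q1 where pq1: "indep2 p1 q1" "p1 \<in> L'" "q1 \<in> L'"
      and iff1: "\<forall>y\<in>L'. y \<noteq> 0 \<longrightarrow> ((\<forall>F. vanishing_form (V \<union> P) F \<longrightarrow> F y = 0) = (\<exists>c. y = c *s p1 \<or> y = c *s q1))"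
      using h unfolding secant_line_def by blast
    have nz: "p1 \<noteq> 0" "q1 \<noteq> 0" using indep2_nz[OF pq1(1)] by auto
    have "\<exists>c. p1 = c *s p1 \<or> p1 = c *s q1" by (rule exI[of _ 1]) simp
    then have "p1 \<in> V \<union> P" using iff1 pq1(2) nz zero_set by blast
    have "\<exists>c. q1 = c *s p1 \<or> q1 = c *s q1" by (rule exI[of _ 1]) simp
    then have "q1 \<in> V \<union> P" using iff1 pq1(3) nz zero_set by blast
    have L'eq: "L' = line_through p1 q1" using line_eq[OF ab(1) pq1(1)] pq1(2,3) ab(2) by simp
    obtain s t where xst: "x = s *s p1 + t *s q1" using h L'eq unfolding line_through_def by blast
    have Xx: "X x $i$j = s * X p1 $i$j + t * X q1 $i$j" for i j unfolding xst Xlin ..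
    show "L' = L"
    proof (cases "p1 \<in> V")
      case pV1: True
      show ?thesis
      proof (cases "q1 \<in> V")
        case True
        obtain v1 where v1: "X p1 = outer v1" using inV pV1 by blast
        obtain v2 where v2: "X q1 = outer v2" using inV True by blast
        have "\<forall>i j. X x $i$j = outer (csqrt s *s v1) $i$j + outer (csqrt t *s v2) $i$j"
          unfolding outer_smult Xx v1 v2 by (simp add: power2_csqrt)
        then show ?thesis using det_outer2 d0 by blast
      next
        case False
        then have "q1 \<in> P" using \<open>q1 \<in> V \<union> P\<close> by blast
        then show ?thesis using VPcase[OF pV1 _ xst] L'eq by simp
      qed
    next
      case False
      then have pP1: "p1 \<in> P" using \<open>p1 \<in> V \<union> P\<close> by blast
      show ?thesis
      proof (cases "q1 \<in> V")
        case True
        have "x = t *s q1 + s *s p1" using xst by (simp add: add.commute)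
        then have "line_through q1 p1 = L" using VPcase[OF True pP1] by blast
        then show ?thesis using L'eq line_comm by simp
      next
        case False
        then have qP1: "q1 \<in> P" using \<open>q1 \<in> V \<union> P\<close> by blast
        have "X x *v w = s *s (X p1 *v w) + t *s (X q1 *v w) + 0 *s (X q1 *v w)"
          by (rule mat_comb3) (simp only: Xx, simp)
        then have "X x *v w = 0" using pP1 qP1 inP by simp
        then have "kap x = 0" by (simp add: kap_def bil_def)
        then show ?thesis using k0 by simp
      qed
    qed
  qed
qed

end

lemma exists_coeffs:
  fixes w :: "complex^3"
  assumes "w \<noteq> 0"
  shows "\<exists>a b c. a \<noteq> 0 \<and> b \<noteq> 0 \<and> c \<noteq> 0 \<and> a * (w$1)^2 + b * (w$2)^2 + c * (w$3)^2 \<noteq> 0"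
proof (cases "(w$1)^2 + (w$2)^2 + (w$3)^2 = 0")
  case False
  then show ?thesis by (intro exI[of _ 1]) simp
next
  case S: True
  have "w$1 \<noteq> 0 \<or> w$2 \<noteq> 0 \<or> w$3 \<noteq> 0" using assms by (auto simp: vec_eq_iff forall_3)
  then show ?thesis
  proof (elim disjE)
    assume h: "w$1 \<noteq> 0"
    have e0: "2 * (w$1)^2 + 1 * (w$2)^2 + 1 * (w$3)^2 = (w$1)^2 + ((w$1)^2 + (w$2)^2 + (w$3)^2)" by (simp add: algebra_simps)
    have e: "2 * (w$1)^2 + 1 * (w$2)^2 + 1 * (w$3)^2 \<noteq> 0" unfolding e0 using S h by simp
    show ?thesis using e by - (rule exI[of _ 2], rule exI[of _ 1], rule exI[of _ 1], simp)
  next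
    assume h: "w$2 \<noteq> 0"
    have e0: "1 * (w$1)^2 + 2 * (w$2)^2 + 1 * (w$3)^2 = (w$2)^2 + ((w$1)^2 + (w$2)^2 + (w$3)^2)" by (simp add: algebra_simps)
    have e: "1 * (w$1)^2 + 2 * (w$2)^2 + 1 * (w$3)^2 \<noteq> 0" unfolding e0 using S h by simp
    show ?thesis using e by - (rule exI[of _ 1], rule exI[of _ 2], rule exI[of _ 1], simp)
  next
    assume h: "w$3 \<noteq> 0"
    have e0: "1 * (w$1)^2 + 1 * (w$2)^2 + 2 * (w$3)^2 = (w$3)^2 + ((w$1)^2 + (w$2)^2 + (w$3)^2)" by (simp add: algebra_simps)
    have e: "1 * (w$1)^2 + 1 * (w$2)^2 + 2 * (w$3)^2 \<noteq> 0" unfolding e0 using S h by simp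
    show ?thesis using e by - (rule exI[of _ 1], rule exI[of _ 1], rule exI[of _ 2], simp)
  qed
qed

definition diag3 :: "complex \<Rightarrow> complex \<Rightarrow> complex \<Rightarrow> complex^3^3" where
  "diag3 a b c = (\<chi> i j. if i = j then (vector [a,b,c] :: complex^3) $ i else 0)"

lemma diag3_sym: "\<forall>i j. diag3 a b c $i$j = diag3 a b c $j$i"
  by (simp add: diag3_def)

lemma diag3_det: "det (diag3 a b c) = a * b * c"
  by (simp add: diag3_def det_3)

lemma diag3_bil: "bil (diag3 a b c) w w = a * (w$1)^2 + b * (w$2)^2 + c * (w$3)^2"
  by (simp add: diag3_def bil_def dotc_3 matrix_vector_mult_def sum_3 power2_eq_square algebra_simps)

theorem proposition4p2:
  fixes V P :: "(complex^6) set"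
  assumes "is_veronese V" and "is_plane P" and "smooth_conic_in P (V \<inter> P)"
  shows "\<exists>g. polyfun g \<and> (\<exists>x. g x \<noteq> 0) \<and>
           (\<forall>x. x \<noteq> 0 \<and> g x \<noteq> 0 \<longrightarrow> (\<exists>!L. secant_line (V \<union> P) L \<and> x \<in> L))"
proof -
  obtain A where Ai: "invertible A" and Vd: "V = {A *v ver y | y. y \<noteq> 0}"
    using assms(1) unfolding is_veronese_def by blast
  obtain B where AB: "A ** B = mat 1" and BA: "B ** A = mat 1" using Ai unfolding invertible_def by blast
  obtain u1 u2 u3 Q where ind: "indep3 u1 u2 u3" and Pd: "P = {comb3 u1 u2 u3 y | y. y \<noteq> 0}"
    and QT: "transpose Q = Q" and Qi: "invertible Q"
    and Cd: "V \<inter> P = {comb3 u1 u2 u3 y | y. y \<noteq> 0 \<and> (\<Sum>i\<in>UNIV. y$i * (Q *v y)$i) = 0}"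
    using assms(3) unfolding smooth_conic_in_def by blast
  obtain w where w0: "w \<noteq> 0" and Pc: "\<forall>z. z \<in> P \<longleftrightarrow> z \<noteq> 0 \<and> sig (B *v z) *v w = 0"
    using classify[OF BA AB Vd ind Pd QT Qi Cd] by blast
  interpret vs: vsetup A B w V P
    by unfold_locales (use BA AB Vd w0 Pc in auto)
  define g where "g x = vs.kap x * det (sig (B *v x))" for x
  show ?thesis
  proof (rule exI[of _ g], intro conjI allI impI)
    show "polyfun g" unfolding g_def by (intro pf_mult vs.kap_pf polyfun_detX)
    obtain a b c where abc: "a \<noteq> 0" "b \<noteq> 0" "c \<noteq> 0" "a * (w$1)^2 + b * (w$2)^2 + c * (w$3)^2 \<noteq> 0"
      using exists_coeffs[OF w0] by blast
    define x0 where "x0 = A *v sinv (diag3 a b c)"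
    have "sig (B *v x0) = diag3 a b c"
      unfolding x0_def using BA sig_sinv[OF diag3_sym] by (simp add: matrix_vector_mul_assoc del: sig_nth)
    then have "g x0 = (a * (w$1)^2 + b * (w$2)^2 + c * (w$3)^2) * (a * b * c)"
      unfolding g_def vs.kap_def by (simp only: diag3_bil diag3_det)
    then show "\<exists>x. g x \<noteq> 0" using abc by (intro exI[of _ x0]) simp
  next
    fix x assume h: "x \<noteq> 0 \<and> g x \<noteq> 0"
    then have "vs.kap x \<noteq> 0" "det (sig (B *v x)) \<noteq> 0" unfolding g_def by auto
    then show "\<exists>!L. secant_line (V \<union> P) L \<and> x \<in> L" using vs.main_x h by blast
  qed
qed


end
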